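(* For each integer $k\geq2$, let $O_k=\langle x,e\mid x^k=x^{k-1}e=0,\ ex=x,\ e^2=e\rangle$. Then the pseudovariety $\llbracket O_k\rrbracket$ is not join irreducible.
   Context: All semigroups are finite; $O_k$ is the finite semigroup with zero $0$ given by the presentation. A pseudovariety is a class of finite semigroups closed under finite direct products, subsemigroups and homomorphic images; $\llbracket S\rrbracket$ is the pseudovariety generated by $S$. A pseudovariety $\mathbf{V}$ is join irreducible if for every set $\mathscr{X}$ of pseudovarieties, $\mathbf{V}\subseteq\bigvee\mathscr{X}$ implies $\mathbf{V}\subseteq\mathbf{X}$ for some $\mathbf{X}\in\mathscr{X}$. *)

theory Defs
  imports Main "HOL-Library.Nat_Bijection"
begin

text \<open>Members of pseudovarieties are represented by finite semigroups whose carrier is a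
  set of natural numbers; every finite semigroup is isomorphic to one of these.\<close>

type_synonym 'a sgr = "'a set \<times> ('a \<Rightarrow> 'a \<Rightarrow> 'a)"

definition fsg :: "'a sgr \<Rightarrow> bool" where
  "fsg S \<longleftrightarrow> finite (fst S) \<and> fst S \<noteq> {} \<and>
     (\<forall>a\<in>fst S. \<forall>b\<in>fst S. snd S a b \<in> fst S) \<and>
     (\<forall>a\<in>fst S. \<forall>b\<in>fst S. \<forall>c\<in>fst S. snd S (snd S a b) c = snd S a (snd S b c))"

definition sg_iso :: "'a sgr \<Rightarrow> 'b sgr \<Rightarrow> bool" where
  "sg_iso S T \<longleftrightarrow> (\<exists>f. bij_betw f (fst S) (fst T) \<and>
     (\<forall>a\<in>fst S. \<forall>b\<in>fst S. f (snd S a b) = snd T (f a) (f b)))"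

definition sg_prod :: "nat sgr \<Rightarrow> nat sgr \<Rightarrow> nat sgr" where
  "sg_prod S T =
    ({prod_encode (a, b) | a b. a \<in> fst S \<and> b \<in> fst T},
     (\<lambda>u v. prod_encode (snd S (fst (prod_decode u)) (fst (prod_decode v)),
                          snd T (snd (prod_decode u)) (snd (prod_decode v)))))"

definition subsg :: "nat sgr \<Rightarrow> nat sgr \<Rightarrow> bool" where
  "subsg T S \<longleftrightarrow> fsg T \<and> fst T \<subseteq> fst S \<and>
     (\<forall>a\<in>fst T. \<forall>b\<in>fst T. snd T a b = snd S a b)"

definition hom_image :: "nat sgr \<Rightarrow> nat sgr \<Rightarrow> bool" where
  "hom_image T S \<longleftrightarrow> fsg T \<and> (\<exists>h. h ` fst S = fst T \<and>
     (\<forall>a\<in>fst S. \<forall>b\<in>fst S. h (snd S a b) = snd T (h a) (h b)))"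

definition pseudovariety :: "nat sgr set \<Rightarrow> bool" where
  "pseudovariety V \<longleftrightarrow> V \<subseteq> {S. fsg S} \<and> V \<noteq> {} \<and>
     (\<forall>S\<in>V. \<forall>T\<in>V. sg_prod S T \<in> V) \<and>
     (\<forall>S\<in>V. \<forall>T. subsg T S \<longrightarrow> T \<in> V) \<and>
     (\<forall>S\<in>V. \<forall>T. hom_image T S \<longrightarrow> T \<in> V)"

definition pv_gen :: "'a sgr \<Rightarrow> nat sgr set" where
  "pv_gen S = \<Inter>{V. pseudovariety V \<and> (\<exists>T\<in>V. sg_iso S T)}"

definition pv_join :: "nat sgr set set \<Rightarrow> nat sgr set" where
  "pv_join X = \<Inter>{W. pseudovariety W \<and> \<Union>X \<subseteq> W}"

definition join_irreducible :: "nat sgr set \<Rightarrow> bool" where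
  "join_irreducible V \<longleftrightarrow>
     (\<forall>X. (\<forall>W\<in>X. pseudovariety W) \<longrightarrow> V \<subseteq> pv_join X \<longrightarrow> (\<exists>W\<in>X. V \<subseteq> W))"

inductive pres_cong :: "('g list \<times> 'g list) set \<Rightarrow> 'g list \<Rightarrow> 'g list \<Rightarrow> bool"
  for R where
  base: "(u, v) \<in> R \<Longrightarrow> pres_cong R u v"
| refl: "pres_cong R u u"
| sym: "pres_cong R u v \<Longrightarrow> pres_cong R v u"
| trans: "pres_cong R u v \<Longrightarrow> pres_cong R v w \<Longrightarrow> pres_cong R u w"
| ctxt: "pres_cong R u v \<Longrightarrow> pres_cong R (p @ u @ q) (p @ v @ q)"

definition pres_class :: "('g list \<times> 'g list) set \<Rightarrow> 'g list \<Rightarrow> 'g list set" where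
  "pres_class R w = {v. pres_cong R w v}"

definition presented :: "('g list \<times> 'g list) set \<Rightarrow> 'g list set sgr" where
  "presented R =
    ({pres_class R w | w. w \<noteq> []},
     (\<lambda>A B. pres_class R ((SOME u. u \<in> A) @ (SOME v. v \<in> B))))"

text \<open>Generators of \<open>O_k\<close>; \<open>Z\<close> is the zero (a semigroup-with-zero presentation
  \<open>\<langle>A | R\<rangle>\<close> is the semigroup presentation \<open>\<langle>A \<union> {0} | R, 0a = a0 = 0\<rangle>\<close>).\<close>
datatype gen = X | E | Z

definition O_rels :: "nat \<Rightarrow> (gen list \<times> gen list) set" where
  "O_rels k =
     {(replicate k X, [Z]), (replicate (k - 1) X @ [E], [Z]), ([E, X], [X]), ([E, E], [E])}
     \<union> {([Z, a], [Z]) | a. True} \<union> {([a, Z], [Z]) | a. True}"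

definition O_sg :: "nat \<Rightarrow> gen list set sgr" where
  "O_sg k = presented (O_rels k)"

end

theory Submission
  imports Defs
begin

definition enc :: "nat \<Rightarrow> nat \<Rightarrow> nat \<Rightarrow> nat" where
  "enc k a b = (if k \<le> a \<or> (a = k - 1 \<and> b = 1) then 0 else 2*a + b)"
definition mulT :: "nat \<Rightarrow> nat \<Rightarrow> nat \<Rightarrow> nat" where
  "mulT k c d = (if c = 0 \<or> d = 0 then 0 else enc k (c div 2 + d div 2) (d mod 2))"

lemma enc_mul:
  assumes "2 \<le> k" "r \<le> 1" "s \<le> 1" "(i,r) \<noteq> (0,0)" "(j,s) \<noteq> (0,0)"
  shows "enc k (i+j) s = mulT k (enc k i r) (enc k j s)"
proof -
  have d: "(2*a+b) div 2 = a" "(2*a+b) mod 2 = b" if "b \<le> (1::nat)" for a b using that by auto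
  show ?thesis using assms unfolding mulT_def enc_def by (auto simp: d)
qed

lemma enc_min: "enc k (min k x) s = enc k x s"
  unfolding enc_def by (auto simp: min_def)

definition NN :: "nat \<Rightarrow> nat sgr" where "NN k = ({0..k}, \<lambda>i j. min k (i+j))"
definition RR :: "nat sgr" where "RR = ({0,1}, \<lambda>a b. b)"
definition SubS :: "nat \<Rightarrow> nat sgr" where
  "SubS k = ({prod_encode (a,b) | a b. a \<le> k \<and> b \<le> 1 \<and> (a,b) \<noteq> (0,0)}, snd (sg_prod (NN k) RR))"
definition hT :: "nat \<Rightarrow> nat \<Rightarrow> nat" where
  "hT k u = enc k (fst (prod_decode u)) (snd (prod_decode u))"
definition TT :: "nat \<Rightarrow> nat sgr" where "TT k = (hT k ` fst (SubS k), mulT k)"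

lemma SubS_op: "snd (SubS k) (prod_encode (a,b)) (prod_encode (c,d)) = prod_encode (min k (a+c), d)"
  by (simp add: SubS_def sg_prod_def NN_def RR_def)

lemma SubS_mem: "x \<in> fst (SubS k) \<longleftrightarrow> (\<exists>a b. x = prod_encode (a,b) \<and> a \<le> k \<and> b \<le> 1 \<and> (a,b) \<noteq> (0,0))"
  by (auto simp: SubS_def)

lemma SubS_fsg: "fsg (SubS k)"
proof -
  have c: "fst (SubS k) \<subseteq> prod_encode ` ({..k} \<times> {..1})"
    by (auto simp: SubS_def)
  have fin: "finite (fst (SubS k))" using c finite_subset by blast
  have ne: "fst (SubS k) \<noteq> {}" using SubS_mem[of "prod_encode (0,1)" k] by auto
  have cl: "\<forall>a\<in>fst (SubS k). \<forall>b\<in>fst (SubS k). snd (SubS k) a b \<in> fst (SubS k)"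
  proof (intro ballI)
    fix x y assume "x \<in> fst (SubS k)" "y \<in> fst (SubS k)"
    then obtain a b c d where "x = prod_encode (a,b)" "y = prod_encode (c,d)"
      "a \<le> k" "b \<le> 1" "c \<le> k" "d \<le> 1" "(a,b) \<noteq> (0,0)" "(c,d) \<noteq> (0,0)"
      unfolding SubS_mem by blast
    then have "snd (SubS k) x y = prod_encode (min k (a+c), d)" "min k (a+c) \<le> k"
      "(min k (a+c), d) \<noteq> (0,0)" "d \<le> 1" by (auto simp: SubS_op)
    then show "snd (SubS k) x y \<in> fst (SubS k)"
      unfolding SubS_mem by blast
  qed
  have as: "\<forall>x\<in>fst (SubS k). \<forall>y\<in>fst (SubS k). \<forall>z\<in>fst (SubS k).
     snd (SubS k) (snd (SubS k) x y) z = snd (SubS k) x (snd (SubS k) y z)"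
  proof (intro ballI)
    fix x y z assume "x \<in> fst (SubS k)" "y \<in> fst (SubS k)" "z \<in> fst (SubS k)"
    then obtain a b c d e f where "x = prod_encode (a,b)" "y = prod_encode (c,d)" "z = prod_encode (e,f)"
      unfolding SubS_mem by blast
    moreover have "min k (min k (a+c) + e) = min k (a + min k (c+e))" by (simp add: min_def)
    ultimately show "snd (SubS k) (snd (SubS k) x y) z = snd (SubS k) x (snd (SubS k) y z)"
      by (simp add: SubS_op)
  qed
  show ?thesis unfolding fsg_def using fin ne cl as by blast
qed

lemma fsg_hom:
  assumes "fsg S" "h ` fst S = fst T"
    "\<forall>a\<in>fst S. \<forall>b\<in>fst S. h (snd S a b) = snd T (h a) (h b)"
  shows "fsg T"
proof -
  have fS: "finite (fst S)" "fst S \<noteq> {}" "\<forall>a\<in>fst S. \<forall>b\<in>fst S. snd S a b \<in> fst S"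
    "\<forall>a\<in>fst S. \<forall>b\<in>fst S. \<forall>c\<in>fst S. snd S (snd S a b) c = snd S a (snd S b c)"
    using assms(1) unfolding fsg_def by simp_all
  have "finite (h ` fst S)" using fS(1) by simp
  then have fin: "finite (fst T)" using assms(2) by simp
  have "h ` fst S \<noteq> {}" using fS(2) by simp
  then have ne: "fst T \<noteq> {}" using assms(2) by simp
  have cl: "\<forall>a\<in>fst T. \<forall>b\<in>fst T. snd T a b \<in> fst T"
  proof (intro ballI)
    fix a b assume "a \<in> fst T" "b \<in> fst T"
    then have "a \<in> h ` fst S" "b \<in> h ` fst S" using assms(2) by simp_all
    then obtain a' b' where m: "a' \<in> fst S" "b' \<in> fst S" and e: "a = h a'" "b = h b'"
      by (meson imageE)
    have 1: "snd S a' b' \<in> fst S" using fS(3) m by blast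
    have 2: "h (snd S a' b') = snd T a b" using assms(3) m e by simp
    have "h (snd S a' b') \<in> h ` fst S" using 1 by (rule imageI)
    then show "snd T a b \<in> fst T" using 2 assms(2) by simp
  qed
  have as: "\<forall>a\<in>fst T. \<forall>b\<in>fst T. \<forall>c\<in>fst T. snd T (snd T a b) c = snd T a (snd T b c)"
  proof (intro ballI)
    fix a b c assume "a \<in> fst T" "b \<in> fst T" "c \<in> fst T"
    then have "a \<in> h ` fst S" "b \<in> h ` fst S" "c \<in> h ` fst S" using assms(2) by simp_all
    then obtain a' b' c' where m: "a' \<in> fst S" "b' \<in> fst S" "c' \<in> fst S"
      and e: "a = h a'" "b = h b'" "c = h c'"
      by (meson imageE)
    have s1: "snd S a' b' \<in> fst S" "snd S b' c' \<in> fst S" using fS(3) m by blast+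
    have "snd T (snd T a b) c = h (snd S (snd S a' b') c')"
      using assms(3) m s1 e by simp
    also have "\<dots> = h (snd S a' (snd S b' c'))" using fS(4) m by simp
    also have "\<dots> = snd T a (snd T b c)"
      using assms(3) m s1 e by simp
    finally show "snd T (snd T a b) c = snd T a (snd T b c)" .
  qed
  show ?thesis unfolding fsg_def using fin ne cl as by blast
qed

lemma hT_hom:
  assumes "2 \<le> k" "a \<in> fst (SubS k)" "b \<in> fst (SubS k)"
  shows "hT k (snd (SubS k) a b) = mulT k (hT k a) (hT k b)"
proof -
  obtain i r j s where ab: "a = prod_encode (i,r)" "b = prod_encode (j,s)" "r \<le> 1" "s \<le> 1"
    "(i,r) \<noteq> (0,0)" "(j,s) \<noteq> (0,0)"
    using assms by (auto simp: SubS_def)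
  show ?thesis using ab enc_mul[OF assms(1) ab(3,4,5,6)] by (simp add: SubS_op hT_def enc_min)
qed

lemma TT_hom_image: "2 \<le> k \<Longrightarrow> hom_image (TT k) (SubS k)"
  unfolding hom_image_def
  using fsg_hom[OF SubS_fsg, where h="hT k" and T="TT k"] hT_hom
  by (auto simp: TT_def)

lemma TT_fsg: "2 \<le> k \<Longrightarrow> fsg (TT k)"
  using TT_hom_image hom_image_def by blast

lemma TT_carrier: "c \<in> fst (TT k) \<longleftrightarrow> (\<exists>a b. c = enc k a b \<and> a \<le> k \<and> b \<le> 1 \<and> (a,b) \<noteq> (0,0))"
proof
  assume "c \<in> fst (TT k)"
  then obtain x where "x \<in> fst (SubS k)" "c = hT k x" by (auto simp: TT_def)
  then obtain a b where "x = prod_encode (a,b)" "a \<le> k" "b \<le> 1" "(a,b) \<noteq> (0,0)" "c = hT k x"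
    unfolding SubS_mem by blast
  then show "\<exists>a b. c = enc k a b \<and> a \<le> k \<and> b \<le> 1 \<and> (a,b) \<noteq> (0,0)"
    unfolding hT_def by auto
next
  assume "\<exists>a b. c = enc k a b \<and> a \<le> k \<and> b \<le> 1 \<and> (a,b) \<noteq> (0,0)"
  then obtain a b where ab: "c = enc k a b" "a \<le> k" "b \<le> 1" "(a,b) \<noteq> (0,0)" by blast
  have "prod_encode (a,b) \<in> fst (SubS k)" using ab unfolding SubS_mem by blast
  moreover have "c = hT k (prod_encode (a,b))" using ab by (simp add: hT_def)
  ultimately show "c \<in> fst (TT k)" by (auto simp: TT_def)
qed

definition cntX :: "gen list \<Rightarrow> nat" where "cntX w = length (filter (\<lambda>g. g = X) w)"
definition lst :: "gen list \<Rightarrow> nat" where "lst w = (if last w = E then 1 else 0)"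
definition phi :: "nat \<Rightarrow> gen list \<Rightarrow> nat" where
  "phi k w = (if Z \<in> set w then 0 else enc k (cntX w) (lst w))"
definition canon :: "nat \<Rightarrow> gen list" where
  "canon c = (if c = 0 then [Z] else replicate (c div 2) X @ (if c mod 2 = 1 then [E] else []))"

lemma lst_le: "lst w \<le> 1" by (simp add: lst_def)

lemma noX_lst: "w \<noteq> [] \<Longrightarrow> Z \<notin> set w \<Longrightarrow> cntX w = 0 \<Longrightarrow> lst w = 1"
proof -
  assume a: "w \<noteq> []" "Z \<notin> set w" "cntX w = 0"
  have l: "last w \<in> set w" using a(1) by simp
  have "filter (\<lambda>g. g = X) w = []" using a(3) by (simp add: cntX_def)
  hence "\<forall>g\<in>set w. g \<noteq> X" by (simp add: filter_empty_conv)
  hence n1: "last w \<noteq> X" using l by blast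
  have n2: "last w \<noteq> Z" using l a(2) by metis
  have "last w = E" using n1 n2 gen.exhaust by metis
  thus ?thesis by (simp add: lst_def)
qed

lemma mulT_0: "mulT k 0 d = 0" "mulT k c 0 = 0" by (auto simp: mulT_def)

lemma phi_app:
  assumes "u \<noteq> []" "v \<noteq> []" "2 \<le> k"
  shows "phi k (u @ v) = mulT k (phi k u) (phi k v)"
proof (cases "Z \<in> set u \<or> Z \<in> set v")
  case True
  then show ?thesis by (auto simp: phi_def mulT_0)
next
  case False
  have c: "cntX (u @ v) = cntX u + cntX v" by (simp add: cntX_def)
  have l: "lst (u @ v) = lst v" using assms by (simp add: lst_def)
  have p1: "(cntX u, lst u) \<noteq> (0,0)" using noX_lst[OF assms(1)] False by (cases "cntX u") auto
  have p2: "(cntX v, lst v) \<noteq> (0,0)" using noX_lst[OF assms(2)] False by (cases "cntX v") auto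
  show ?thesis using False enc_mul[OF assms(3) lst_le lst_le p1 p2]
    by (simp add: phi_def c l)
qed

lemma phi_ctx:
  assumes "u \<noteq> []" "v \<noteq> []" "2 \<le> k" "phi k u = phi k v"
  shows "phi k (p @ u @ q) = phi k (p @ v @ q)"
proof -
  have 1: "phi k (u @ q) = phi k (v @ q)"
    using assms by (cases "q = []") (simp_all add: phi_app)
  show ?thesis
    using assms 1 by (cases "p = []") (simp_all add: phi_app)
qed

lemma cntX_rep: "cntX (replicate n X @ ys) = n + cntX ys"
  by (simp add: cntX_def)

lemma cong_phi:
  assumes "pres_cong (O_rels k) u v" "2 \<le> k"
  shows "(u = [] \<longleftrightarrow> v = []) \<and> (u \<noteq> [] \<longrightarrow> phi k u = phi k v)"
  using assms(1)
proof induction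
  case (base u v)
  have k1: "k - 1 \<noteq> 0" "k \<noteq> 0" using assms(2) by auto
  have r1: "phi k (replicate k X) = 0"
    using cntX_rep[of k "[]"] k1 by (simp add: phi_def enc_def)
  have r2: "phi k (replicate (k-1) X @ [E]) = 0"
    using cntX_rep[of "k-1" "[E]"] k1 by (simp add: phi_def enc_def lst_def cntX_def)
  have e1: "phi k [E,X] = phi k [X]" "phi k [E,E] = phi k [E]" "phi k [Z] = 0"
    by (simp_all add: phi_def cntX_def lst_def)
  have z1: "phi k [Z,a] = 0" "phi k [a,Z] = 0" for a by (simp_all add: phi_def)
  have ne: "replicate k X \<noteq> []" using k1 by simp
  from base have "(u,v) \<in> O_rels k" .
  then have "u \<noteq> [] \<and> v \<noteq> [] \<and> phi k u = phi k v"
    unfolding O_rels_def using r1 r2 e1 z1 ne by fastforce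
  then show ?case by simp
next
  case (refl u) then show ?case by simp
next
  case (sym u v) then show ?case by simp
next
  case (trans u v w) then show ?case by simp
next
  case (ctxt u v p q)
  then show ?case using phi_ctx[OF _ _ assms(2)] by auto
qed

lemma TT_cases:
  assumes "c \<in> fst (TT k)"
  obtains "c = 0" | a b where "c = 2*a+b" "c \<noteq> 0" "a < k" "\<not> (a = k-1 \<and> b = 1)" "b \<le> 1" "(a,b) \<noteq> (0,0)"
  using assms unfolding TT_carrier enc_def by (metis (no_types, lifting) not_le)

lemma canon_enc: "b \<le> 1 \<Longrightarrow> 2*a+b \<noteq> 0 \<Longrightarrow> canon (2*a+b) = replicate a X @ (if b = 1 then [E] else [])"
  by (auto simp: canon_def)

lemma phi_canon:
  assumes "c \<in> fst (TT k)" "2 \<le> k"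
  shows "phi k (canon c) = c"
  using assms(1)
proof (cases rule: TT_cases)
  case 1 then show ?thesis by (simp add: canon_def phi_def)
next
  case (2 a b)
  have cz: "Z \<notin> set (canon c)" using 2 by (auto simp: canon_enc)
  have cx: "cntX (canon c) = a" using 2 by (auto simp: canon_enc cntX_rep cntX_def)
  have cl: "lst (canon c) = b" using 2 by (auto simp: canon_enc lst_def)
  show ?thesis using 2 cz cx cl by (auto simp: phi_def enc_def)
qed

lemma canon_ne: "canon c \<noteq> []"
  by (auto simp: canon_def)

lemma phi_in:
  assumes "w \<noteq> []" "2 \<le> k"
  shows "phi k w \<in> fst (TT k)"
proof -
  have z: "0 \<in> fst (TT k)" unfolding TT_carrier
    using assms(2) by (intro exI[of _ k] exI[of _ 0]) (auto simp: enc_def)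
  show ?thesis
  proof (cases "Z \<in> set w \<or> k \<le> cntX w")
    case True then show ?thesis using z by (auto simp: phi_def enc_def)
  next
    case False
    then have "(cntX w, lst w) \<noteq> (0,0)" using noX_lst[OF assms(1)] by (cases "cntX w") auto
    then have "phi k w = enc k (cntX w) (lst w) \<and> cntX w \<le> k \<and> lst w \<le> 1 \<and> (cntX w, lst w) \<noteq> (0,0)"
      using False lst_le[of w] unfolding phi_def by auto
    then show ?thesis unfolding TT_carrier by blast
  qed
qed

lemma Z_absorb: "pres_cong (O_rels k) (Z # w) [Z]"
proof (induction w)
  case Nil show ?case by (rule pres_cong.refl)
next
  case (Cons a w)
  have "([Z,a],[Z]) \<in> O_rels k" by (simp add: O_rels_def)
  then have "pres_cong (O_rels k) ([] @ [Z,a] @ w) ([] @ [Z] @ w)"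
    by (intro pres_cong.ctxt pres_cong.base)
  then have "pres_cong (O_rels k) (Z # a # w) (Z # w)" by simp
  then show ?case using Cons pres_cong.trans by blast
qed

lemma phi_single: assumes "2 \<le> k" shows "phi k [X] = 2" "phi k [E] = 1" "phi k [Z] = 0"
  using assms
  by (auto simp: phi_def enc_def cntX_def lst_def)

lemma step:
  assumes c: "c \<in> fst (TT k)" and k: "2 \<le> k"
  shows "pres_cong (O_rels k) (g # canon c) (canon (mulT k (phi k [g]) c))"
proof (cases "g = Z")
  case True
  then show ?thesis using Z_absorb k by (simp add: phi_single mulT_0 canon_def)
next
  case gZ: False
  show ?thesis using c
  proof (cases rule: TT_cases)
    case 1
    have "([g,Z],[Z]) \<in> O_rels k" by (simp add: O_rels_def)
    then show ?thesis using 1 by (simp add: mulT_0 canon_def pres_cong.base)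
  next
    case (2 a b)
    define tl where "tl = (if b = 1 then [E] else [])"
    have cc: "canon c = replicate a X @ tl" using 2 canon_enc[of b a] by (simp add: tl_def)
    have cd: "c div 2 = a" "c mod 2 = b" using 2 by auto
    show ?thesis
    proof (cases g)
      case Z then show ?thesis using gZ by simp
    next
      case X
      have m: "mulT k (phi k [g]) c = enc k (Suc a) b"
        using X 2 cd k by (auto simp: phi_single mulT_def)
      have w: "g # canon c = replicate (Suc a) X @ tl" using X cc by simp
      show ?thesis
      proof (cases "enc k (Suc a) b = 0")
        case True
        then have "k = Suc a \<and> b = 0 \<or> k - 1 = Suc a \<and> b = 1" using 2 by (auto simp: enc_def split: if_splits)
        then have "g # canon c = replicate k X \<or> g # canon c = replicate (k - 1) X @ [E]"
          unfolding w tl_def by (elim disjE) (simp_all del: replicate_Suc)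
        then have "(g # canon c, [Z]) \<in> O_rels k" unfolding O_rels_def by auto
        then show ?thesis using True m by (simp add: canon_def pres_cong.base)
      next
        case False
        then have "enc k (Suc a) b = 2 * Suc a + b" by (auto simp: enc_def split: if_splits)
        then have "canon (enc k (Suc a) b) = replicate (Suc a) X @ tl"
          using 2 canon_enc[of b "Suc a"] by (simp add: tl_def)
        then show ?thesis using m w by (simp add: pres_cong.refl)
      qed
    next
      case E
      have ce: "enc k a b = c" using 2 by (simp add: enc_def)
      have m: "mulT k (phi k [g]) c = c"
        using E 2 cd k ce by (auto simp: phi_single mulT_def)
      show ?thesis
      proof (cases a)
        case 0
        then have "b = 1" "canon c = [E]" using 2 cc by (auto simp: tl_def)
        moreover have "([E,E],[E]) \<in> O_rels k" by (simp add: O_rels_def)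
        ultimately show ?thesis using m E by (simp add: pres_cong.base)
      next
        case (Suc a')
        have "([E,X],[X]) \<in> O_rels k" by (simp add: O_rels_def)
        then have "pres_cong (O_rels k) ([] @ [E,X] @ (replicate a' X @ tl)) ([] @ [X] @ (replicate a' X @ tl))"
          by (intro pres_cong.ctxt pres_cong.base)
        then show ?thesis using m E cc Suc by simp
      qed
    qed
  qed
qed

lemma norm:
  assumes "w \<noteq> []" "2 \<le> k"
  shows "pres_cong (O_rels k) w (canon (phi k w))"
  using assms(1)
proof (induction w)
  case Nil then show ?case by simp
next
  case (Cons g w)
  show ?case
  proof (cases "w = []")
    case True
    then show ?thesis using assms(2)
      by (cases g) (simp_all add: phi_single canon_def pres_cong.refl)
  next
    case False
    have 1: "pres_cong (O_rels k) ([g] @ w @ []) ([g] @ canon (phi k w) @ [])"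
      using Cons.IH[OF False] by (rule pres_cong.ctxt)
    have 2: "pres_cong (O_rels k) (g # canon (phi k w)) (canon (mulT k (phi k [g]) (phi k w)))"
      using step[OF phi_in[OF False assms(2)] assms(2)] .
    have 3: "phi k (g # w) = mulT k (phi k [g]) (phi k w)"
      using phi_app[of "[g]" w k] False assms(2) by simp
    show ?thesis using 1 2 3 pres_cong.trans by fastforce
  qed
qed

lemma class_eq: "pres_cong R u v \<Longrightarrow> pres_class R u = pres_class R v"
  unfolding pres_class_def using pres_cong.sym pres_cong.trans by blast

lemma O_mem: "A \<in> fst (O_sg k) \<longleftrightarrow> (\<exists>w. w \<noteq> [] \<and> A = pres_class (O_rels k) w)"
  by (auto simp: O_sg_def presented_def)

lemma O_op: "snd (O_sg k) A B = pres_class (O_rels k) ((SOME u. u \<in> A) @ (SOME v. v \<in> B))"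
  by (simp add: O_sg_def presented_def)

lemma some_cls:
  assumes "w \<noteq> []" "2 \<le> k"
  shows "(SOME u. u \<in> pres_class (O_rels k) w) \<noteq> [] \<and>
         phi k (SOME u. u \<in> pres_class (O_rels k) w) = phi k w"
proof -
  define u where "u = (SOME u. u \<in> pres_class (O_rels k) w)"
  have "w \<in> pres_class (O_rels k) w" by (simp add: pres_class_def pres_cong.refl)
  then have "u \<in> pres_class (O_rels k) w" unfolding u_def by (rule someI)
  then have "pres_cong (O_rels k) w u" by (simp add: pres_class_def)
  then have "u \<noteq> [] \<and> phi k w = phi k u" using cong_phi[OF _ assms(2)] assms(1) by blast
  then show ?thesis unfolding u_def by simp
qed

definition fO :: "nat \<Rightarrow> gen list set \<Rightarrow> nat" where
  "fO k A = phi k (SOME u. u \<in> A)"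

lemma O_iso:
  assumes k: "2 \<le> k"
  shows "sg_iso (O_sg k) (TT k)"
  unfolding sg_iso_def
proof (intro exI[of _ "fO k"] conjI)
  show "bij_betw (fO k) (fst (O_sg k)) (fst (TT k))"
    unfolding bij_betw_def
  proof
    show "inj_on (fO k) (fst (O_sg k))"
    proof (rule inj_onI)
      fix A B assume A: "A \<in> fst (O_sg k)" and B: "B \<in> fst (O_sg k)" and e: "fO k A = fO k B"
      obtain w where w: "w \<noteq> []" "A = pres_class (O_rels k) w" using A O_mem by blast
      obtain v where v: "v \<noteq> []" "B = pres_class (O_rels k) v" using B O_mem by blast
      have "phi k w = phi k v" using e some_cls[OF w(1) k] some_cls[OF v(1) k] w v
        by (simp add: fO_def)
      then have "pres_cong (O_rels k) w v"
        using norm[OF w(1) k] norm[OF v(1) k] pres_cong.sym pres_cong.trans by metis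
      then show "A = B" using w v class_eq by blast
    qed
    show "fO k ` fst (O_sg k) = fst (TT k)"
    proof
      show "fO k ` fst (O_sg k) \<subseteq> fst (TT k)"
      proof
        fix c assume "c \<in> fO k ` fst (O_sg k)"
        then obtain A where A: "A \<in> fst (O_sg k)" "c = fO k A" by blast
        obtain w where w: "w \<noteq> []" "A = pres_class (O_rels k) w" using A O_mem by blast
        have "c = phi k w" using A w some_cls[OF w(1) k] by (simp add: fO_def)
        then show "c \<in> fst (TT k)" using phi_in[OF w(1) k] by simp
      qed
      show "fst (TT k) \<subseteq> fO k ` fst (O_sg k)"
      proof
        fix c assume c: "c \<in> fst (TT k)"
        have m: "pres_class (O_rels k) (canon c) \<in> fst (O_sg k)" using O_mem canon_ne by blast
        have "fO k (pres_class (O_rels k) (canon c)) = c"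
          using some_cls[OF canon_ne k] phi_canon[OF c k] by (simp add: fO_def)
        then show "c \<in> fO k ` fst (O_sg k)" using m by (metis imageI)
      qed
    qed
  qed
  show "\<forall>a\<in>fst (O_sg k). \<forall>b\<in>fst (O_sg k). fO k (snd (O_sg k) a b) = snd (TT k) (fO k a) (fO k b)"
  proof (intro ballI)
    fix A B assume A: "A \<in> fst (O_sg k)" and B: "B \<in> fst (O_sg k)"
    obtain w where w: "w \<noteq> []" "A = pres_class (O_rels k) w" using A O_mem by blast
    obtain v where v: "v \<noteq> []" "B = pres_class (O_rels k) v" using B O_mem by blast
    define u1 where "u1 = (SOME u. u \<in> A)"
    define u2 where "u2 = (SOME u. u \<in> B)"
    have n1: "u1 \<noteq> []" using some_cls[OF w(1) k] w u1_def by simp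
    have n2: "u2 \<noteq> []" using some_cls[OF v(1) k] v u2_def by simp
    have "fO k (snd (O_sg k) A B) = phi k (u1 @ u2)"
      using some_cls[of "u1 @ u2" k] n1 n2 k by (simp add: O_op fO_def u1_def u2_def)
    also have "\<dots> = mulT k (phi k u1) (phi k u2)" using phi_app[OF n1 n2 k] .
    also have "\<dots> = mulT k (fO k A) (fO k B)" by (simp add: fO_def u1_def u2_def)
    finally show "fO k (snd (O_sg k) A B) = snd (TT k) (fO k A) (fO k B)" by (simp add: TT_def)
  qed
qed

lemma O_closed: "2 \<le> k \<Longrightarrow> \<forall>a\<in>fst (O_sg k). \<forall>b\<in>fst (O_sg k). snd (O_sg k) a b \<in> fst (O_sg k)"
proof (intro ballI)
  assume k: "2 \<le> k"
  fix A B assume A: "A \<in> fst (O_sg k)" and B: "B \<in> fst (O_sg k)"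
  obtain w where w: "w \<noteq> []" "A = pres_class (O_rels k) w" using A O_mem by blast
  have "w \<in> A" using w by (simp add: pres_class_def pres_cong.refl)
  then have "(SOME u. u \<in> A) \<in> A" by (rule someI)
  then have "pres_cong (O_rels k) w (SOME u. u \<in> A)" using w by (simp add: pres_class_def)
  then have "(SOME u. u \<in> A) \<noteq> []" using w(1) cong_phi[OF _ k] by blast
  then show "snd (O_sg k) A B \<in> fst (O_sg k)" unfolding O_op O_mem by auto
qed

lemma iso_hom_image:
  assumes i1: "sg_iso S T1" and i2: "sg_iso S T2"
    and cl: "\<forall>a\<in>fst S. \<forall>b\<in>fst S. snd S a b \<in> fst S" and f2: "fsg T2"
  shows "hom_image T2 T1"
proof -
  obtain f1 where b1: "bij_betw f1 (fst S) (fst T1)"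
    and h1: "\<forall>a\<in>fst S. \<forall>b\<in>fst S. f1 (snd S a b) = snd T1 (f1 a) (f1 b)"
    using i1 unfolding sg_iso_def by blast
  obtain f2 where b2: "bij_betw f2 (fst S) (fst T2)"
    and h2: "\<forall>a\<in>fst S. \<forall>b\<in>fst S. f2 (snd S a b) = snd T2 (f2 a) (f2 b)"
    using i2 unfolding sg_iso_def by blast
  define g where "g = inv_into (fst S) f1"
  have bg: "bij_betw g (fst T1) (fst S)" unfolding g_def using b1 by (rule bij_betw_inv_into)
  have inj1: "inj_on f1 (fst S)" and im1: "f1 ` fst S = fst T1" using b1 by (auto simp: bij_betw_def)
  have im: "(\<lambda>x. f2 (g x)) ` fst T1 = fst T2"
  proof -
    have "(\<lambda>x. f2 (g x)) ` fst T1 = f2 ` (g ` fst T1)" by auto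
    also have "g ` fst T1 = fst S" using bg by (simp add: bij_betw_def)
    also have "f2 ` fst S = fst T2" using b2 by (simp add: bij_betw_def)
    finally show ?thesis .
  qed
  have hom: "\<forall>a\<in>fst T1. \<forall>b\<in>fst T1. f2 (g (snd T1 a b)) = snd T2 (f2 (g a)) (f2 (g b))"
  proof (intro ballI)
    fix a b assume a: "a \<in> fst T1" and b: "b \<in> fst T1"
    have ga: "g a \<in> fst S" "f1 (g a) = a" using a im1 unfolding g_def
      by (auto intro: inv_into_into f_inv_into_f)
    have gb: "g b \<in> fst S" "f1 (g b) = b" using b im1 unfolding g_def
      by (auto intro: inv_into_into f_inv_into_f)
    have "snd T1 a b = f1 (snd S (g a) (g b))" using h1 ga gb by simp
    moreover have "snd S (g a) (g b) \<in> fst S" using cl ga gb by blast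
    ultimately have "g (snd T1 a b) = snd S (g a) (g b)"
      unfolding g_def using inj1 by (simp add: inv_into_f_f)
    then show "f2 (g (snd T1 a b)) = snd T2 (f2 (g a)) (f2 (g b))" using h2 ga gb by simp
  qed
  show ?thesis unfolding hom_image_def using f2 im hom by blast
qed

lemma prod_car: "fst (sg_prod S T) = prod_encode ` (fst S \<times> fst T)"
  by (auto simp: sg_prod_def)

lemma prod_op: "snd (sg_prod S T) (prod_encode (a,b)) (prod_encode (c,d)) = prod_encode (snd S a c, snd T b d)"
  by (simp add: sg_prod_def)

lemma fsg_prod:
  assumes S: "fsg S" and T: "fsg T"
  shows "fsg (sg_prod S T)"
proof -
  have fS: "finite (fst S)" "fst S \<noteq> {}" "\<forall>a\<in>fst S. \<forall>b\<in>fst S. snd S a b \<in> fst S"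
    "\<forall>a\<in>fst S. \<forall>b\<in>fst S. \<forall>c\<in>fst S. snd S (snd S a b) c = snd S a (snd S b c)"
    using S unfolding fsg_def by simp_all
  have fT: "finite (fst T)" "fst T \<noteq> {}" "\<forall>a\<in>fst T. \<forall>b\<in>fst T. snd T a b \<in> fst T"
    "\<forall>a\<in>fst T. \<forall>b\<in>fst T. \<forall>c\<in>fst T. snd T (snd T a b) c = snd T a (snd T b c)"
    using T unfolding fsg_def by simp_all
  have fin: "finite (fst (sg_prod S T))" unfolding prod_car using fS(1) fT(1) by simp
  have ne: "fst (sg_prod S T) \<noteq> {}" unfolding prod_car using fS(2) fT(2) by simp
  have cl: "\<forall>x\<in>fst (sg_prod S T). \<forall>y\<in>fst (sg_prod S T). snd (sg_prod S T) x y \<in> fst (sg_prod S T)"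
    unfolding prod_car using fS(3) fT(3) by (auto simp: prod_op)
  have as: "\<forall>x\<in>fst (sg_prod S T). \<forall>y\<in>fst (sg_prod S T). \<forall>z\<in>fst (sg_prod S T).
      snd (sg_prod S T) (snd (sg_prod S T) x y) z = snd (sg_prod S T) x (snd (sg_prod S T) y z)"
    unfolding prod_car using fS(4) fT(4) by (auto simp: prod_op)
  show ?thesis unfolding fsg_def using fin ne cl as by blast
qed

lemma hom_image_elim:
  assumes "hom_image T S" "a \<in> fst T"
  obtains h a' where "a' \<in> fst S" "h a' = a" "h ` fst S = fst T"
    "\<forall>a\<in>fst S. \<forall>b\<in>fst S. h (snd S a b) = snd T (h a) (h b)"
  using assms unfolding hom_image_def by (metis imageE)

definition W1 :: "nat sgr set" where
  "W1 = {S. fsg S \<and> (\<forall>a\<in>fst S. \<forall>b\<in>fst S. snd S a b = snd S b a)}"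
definition W2 :: "nat sgr set" where
  "W2 = {S. fsg S \<and> (\<forall>a\<in>fst S. \<forall>b\<in>fst S. snd S a b = b)}"

lemma triv_fsg: "fsg ({0}, \<lambda>a b. 0)" by (simp add: fsg_def)

lemma pv_W1: "pseudovariety W1"
  unfolding pseudovariety_def
proof (intro conjI ballI allI impI)
  show "W1 \<subseteq> {S. fsg S}" by (auto simp: W1_def)
  show "W1 \<noteq> {}" using triv_fsg unfolding W1_def by auto
next
  fix S T assume S: "S \<in> W1" and T: "T \<in> W1"
  have f: "fsg (sg_prod S T)" using fsg_prod S T unfolding W1_def by blast
  have "snd (sg_prod S T) x y = snd (sg_prod S T) y x" if x: "x \<in> fst (sg_prod S T)" and y: "y \<in> fst (sg_prod S T)" for x y
  proof -
    obtain a b where ab: "x = prod_encode (a,b)" "a \<in> fst S" "b \<in> fst T" using x unfolding prod_car by blast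
    obtain c d where cd: "y = prod_encode (c,d)" "c \<in> fst S" "d \<in> fst T" using y unfolding prod_car by blast
    have "snd S a c = snd S c a" "snd T b d = snd T d b" using S T ab cd unfolding W1_def by blast+
    then show ?thesis using ab cd by (simp only: prod_op)
  qed
  then show "sg_prod S T \<in> W1" using f unfolding W1_def by blast
next
  fix S T assume S: "S \<in> W1" and T: "subsg T S"
  have T1: "fsg T" "fst T \<subseteq> fst S" "\<forall>a\<in>fst T. \<forall>b\<in>fst T. snd T a b = snd S a b"
    using T unfolding subsg_def by simp_all
  have S1: "\<forall>a\<in>fst S. \<forall>b\<in>fst S. snd S a b = snd S b a" using S unfolding W1_def by simp
  have "\<forall>a\<in>fst T. \<forall>b\<in>fst T. snd T a b = snd T b a"
  proof (intro ballI)
    fix a b assume "a \<in> fst T" "b \<in> fst T"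
    then show "snd T a b = snd T b a" using T1 S1 by (simp add: subsetD)
  qed
  then show "T \<in> W1" using T1(1) unfolding W1_def by simp
next
  fix S T assume S: "S \<in> W1" and T: "hom_image T S"
  have "snd T a b = snd T b a" if a: "a \<in> fst T" and b: "b \<in> fst T" for a b
  proof -
    obtain h where h: "h ` fst S = fst T" "\<forall>a\<in>fst S. \<forall>b\<in>fst S. h (snd S a b) = snd T (h a) (h b)"
      using T unfolding hom_image_def by blast
    obtain a' where a': "a' \<in> fst S" "a = h a'" using a h(1) by blast
    obtain b' where b': "b' \<in> fst S" "b = h b'" using b h(1) by blast
    have "snd S a' b' = snd S b' a'" using S a' b' unfolding W1_def by blast
    then show ?thesis using h(2) a' b' by metis
  qed
  then show "T \<in> W1" using T unfolding W1_def hom_image_def by blast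
qed

lemma pv_W2: "pseudovariety W2"
  unfolding pseudovariety_def
proof (intro conjI ballI allI impI)
  show "W2 \<subseteq> {S. fsg S}" by (auto simp: W2_def)
  show "W2 \<noteq> {}" using triv_fsg unfolding W2_def by auto
next
  fix S T assume S: "S \<in> W2" and T: "T \<in> W2"
  have f: "fsg (sg_prod S T)" using fsg_prod S T unfolding W2_def by blast
  have "snd (sg_prod S T) x y = y" if x: "x \<in> fst (sg_prod S T)" and y: "y \<in> fst (sg_prod S T)" for x y
  proof -
    obtain a b where ab: "x = prod_encode (a,b)" "a \<in> fst S" "b \<in> fst T" using x unfolding prod_car by blast
    obtain c d where cd: "y = prod_encode (c,d)" "c \<in> fst S" "d \<in> fst T" using y unfolding prod_car by blast
    have "snd S a c = c" "snd T b d = d" using S T ab cd unfolding W2_def by blast+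
    then show ?thesis using ab cd by (simp only: prod_op)
  qed
  then show "sg_prod S T \<in> W2" using f unfolding W2_def by blast
next
  fix S T assume S: "S \<in> W2" and T: "subsg T S"
  have T1: "fsg T" "fst T \<subseteq> fst S" "\<forall>a\<in>fst T. \<forall>b\<in>fst T. snd T a b = snd S a b"
    using T unfolding subsg_def by simp_all
  have S1: "\<forall>a\<in>fst S. \<forall>b\<in>fst S. snd S a b = b" using S unfolding W2_def by simp
  have "\<forall>a\<in>fst T. \<forall>b\<in>fst T. snd T a b = b"
  proof (intro ballI)
    fix a b assume "a \<in> fst T" "b \<in> fst T"
    then show "snd T a b = b" using T1 S1 by (simp add: subsetD)
  qed
  then show "T \<in> W2" using T1(1) unfolding W2_def by simp
next
  fix S T assume S: "S \<in> W2" and T: "hom_image T S"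
  have "snd T a b = b" if a: "a \<in> fst T" and b: "b \<in> fst T" for a b
  proof -
    obtain h where h: "h ` fst S = fst T" "\<forall>a\<in>fst S. \<forall>b\<in>fst S. h (snd S a b) = snd T (h a) (h b)"
      using T unfolding hom_image_def by blast
    obtain a' where a': "a' \<in> fst S" "a = h a'" using a h(1) by blast
    obtain b' where b': "b' \<in> fst S" "b = h b'" using b h(1) by blast
    have "snd S a' b' = b'" using S a' b' unfolding W2_def by blast
    then show ?thesis using h(2) a' b' by metis
  qed
  then show "T \<in> W2" using T unfolding W2_def hom_image_def by blast
qed

lemma NN_W1: "NN k \<in> W1"
proof -
  have "min k (min k (a + b) + c) = min k (a + min k (b + c))" for a b c :: nat by (simp add: min_def)
  then have "fsg (NN k)" unfolding fsg_def NN_def by auto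
  moreover have "\<forall>a\<in>fst (NN k). \<forall>b\<in>fst (NN k). snd (NN k) a b = snd (NN k) b a"
    by (simp add: NN_def add.commute)
  ultimately show ?thesis unfolding W1_def by blast
qed

lemma RR_W2: "RR \<in> W2"
  unfolding W2_def RR_def fsg_def by auto

lemma SubS_sub: "subsg (SubS k) (sg_prod (NN k) RR)"
  unfolding subsg_def
proof (intro conjI)
  show "fsg (SubS k)" by (rule SubS_fsg)
  show "fst (SubS k) \<subseteq> fst (sg_prod (NN k) RR)"
    unfolding prod_car by (auto simp: SubS_def NN_def RR_def)
  show "\<forall>a\<in>fst (SubS k). \<forall>b\<in>fst (SubS k). snd (SubS k) a b = snd (sg_prod (NN k) RR) a b"
    by (simp add: SubS_def)
qed

lemma TT_in:
  assumes k: "2 \<le> k" and W: "pseudovariety W" and sub: "W1 \<union> W2 \<subseteq> W"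
  shows "TT k \<in> W"
proof -
  have W': "\<forall>S\<in>W. \<forall>T\<in>W. sg_prod S T \<in> W" "\<forall>S\<in>W. \<forall>T. subsg T S \<longrightarrow> T \<in> W"
    "\<forall>S\<in>W. \<forall>T. hom_image T S \<longrightarrow> T \<in> W"
    using W unfolding pseudovariety_def by simp_all
  have "NN k \<in> W" "RR \<in> W" using NN_W1 RR_W2 sub by blast+
  then have "sg_prod (NN k) RR \<in> W" using W'(1) by blast
  then have "SubS k \<in> W" using W'(2) SubS_sub by blast
  then show ?thesis using W'(3) TT_hom_image[OF k] by blast
qed

theorem proposition4p15:
  fixes k :: nat
  assumes "k \<ge> 2"
  shows "\<not> join_irreducible (pv_gen (O_sg k))"
proof
  assume ji: "join_irreducible (pv_gen (O_sg k))"
  have k: "2 \<le> k" using assms by simp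
  have iso: "sg_iso (O_sg k) (TT k)" using O_iso[OF k] .
  have Tgen: "TT k \<in> pv_gen (O_sg k)"
    unfolding pv_gen_def
  proof (rule InterI)
    fix V assume "V \<in> {V. pseudovariety V \<and> (\<exists>T\<in>V. sg_iso (O_sg k) T)}"
    then obtain T' where V: "pseudovariety V" "T' \<in> V" "sg_iso (O_sg k) T'" by blast
    have "hom_image (TT k) T'" using iso_hom_image[OF V(3) iso O_closed[OF k] TT_fsg[OF k]] .
    moreover have "\<forall>S\<in>V. \<forall>T. hom_image T S \<longrightarrow> T \<in> V" using V(1) unfolding pseudovariety_def by simp
    ultimately show "TT k \<in> V" using V(2) by blast
  qed
  have sub: "pv_gen (O_sg k) \<subseteq> pv_join {W1, W2}"
  proof
    fix S assume S: "S \<in> pv_gen (O_sg k)"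
    show "S \<in> pv_join {W1, W2}"
      unfolding pv_join_def
    proof (rule InterI)
      fix W assume "W \<in> {W. pseudovariety W \<and> \<Union>{W1, W2} \<subseteq> W}"
      then have W: "pseudovariety W" "W1 \<union> W2 \<subseteq> W" by auto
      have "TT k \<in> W" using TT_in[OF k W] .
      then have "W \<in> {V. pseudovariety V \<and> (\<exists>T\<in>V. sg_iso (O_sg k) T)}" using W(1) iso by blast
      then show "S \<in> W" using S unfolding pv_gen_def by (rule_tac InterD) assumption+
    qed
  qed
  have e1: "1 = enc k 0 1 \<and> (0::nat) \<le> k \<and> (1::nat) \<le> 1 \<and> (0::nat, 1::nat) \<noteq> (0,0)"
    using k by (simp add: enc_def)
  have m1: "1 \<in> fst (TT k)" unfolding TT_carrier using e1 by blast
  have e2: "2 = enc k 1 0 \<and> (1::nat) \<le> k \<and> (0::nat) \<le> 1 \<and> (1::nat, 0::nat) \<noteq> (0,0)"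
    using k by (simp add: enc_def)
  have m2: "2 \<in> fst (TT k)" unfolding TT_carrier using e2 by blast
  have d: "(1::nat) div 2 = 0" "(2::nat) div 2 = 1" "(1::nat) mod 2 = 1" "(2::nat) mod 2 = 0" by simp_all
  have c1: "mulT k 1 2 \<noteq> mulT k 2 1" using k by (simp add: mulT_def enc_def d)
  have c2: "mulT k 2 2 \<noteq> 2" using k by (simp add: mulT_def enc_def d)
  have so: "snd (TT k) = mulT k" by (simp add: TT_def)
  have n1: "TT k \<notin> W1"
  proof
    assume "TT k \<in> W1"
    then have "\<forall>a\<in>fst (TT k). \<forall>b\<in>fst (TT k). snd (TT k) a b = snd (TT k) b a"
      unfolding W1_def by blast
    then have "snd (TT k) 1 2 = snd (TT k) 2 1" using m1 m2 by blast
    then have "mulT k 1 2 = mulT k 2 1" by (simp only: so)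
    then show False using c1 by blast
  qed
  have n2: "TT k \<notin> W2"
  proof
    assume "TT k \<in> W2"
    then have "\<forall>a\<in>fst (TT k). \<forall>b\<in>fst (TT k). snd (TT k) a b = b"
      unfolding W2_def by blast
    then have "snd (TT k) 2 2 = 2" using m2 by blast
    then have "mulT k 2 2 = 2" by (simp only: so)
    then show False using c2 by blast
  qed
  have "\<exists>W\<in>{W1, W2}. pv_gen (O_sg k) \<subseteq> W"
  proof -
    have a1: "\<forall>W\<in>{W1, W2}. pseudovariety W" using pv_W1 pv_W2 by simp
    have "(\<forall>W\<in>{W1, W2}. pseudovariety W) \<longrightarrow> pv_gen (O_sg k) \<subseteq> pv_join {W1, W2} \<longrightarrow>
        (\<exists>W\<in>{W1, W2}. pv_gen (O_sg k) \<subseteq> W)"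
      using ji unfolding join_irreducible_def by (rule spec)
    then show ?thesis using a1 sub by blast
  qed
  then show False using Tgen n1 n2 by blast
qed

end
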